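(* Let $r\ge 3$ and let $\mathcal{M}$ be a uniform oriented matroid of rank $r$ on $n$ elements. If $X,Y$ are cocircuits of $\mathcal{M}$ with $|X^0\setminus Y^0|=2$, then $d_{\mathcal{M}}(X,Y)\le n-r+1$.
   Context: Sign vectors: for a finite set $E$ and $X\in\{+,-,0\}^E$, write $X^+=\{e:X_e=+\}$, $X^-=\{e:X_e=-\}$, $X^0=\{e:X_e=0\}$, $\operatorname{supp}(X)=X^+\cup X^-$, and $-X$ for the componentwise negation. For sign vectors $X,Y$, the separating set is $S(X,Y)=(X^+\cap Y^-)\cup(X^-\cap Y^+)$, and the composition $X\circ Y$ is given by $(X\circ Y)_e=X_e$ if $X_e\neq 0$ and $(X\circ Y)_e=Y_e$ otherwise. An oriented matroid $\mathcal{M}=(E,\mathcal{C}^* )$ is a finite set $E$ together with a set $\mathcal{C}^*\subseteq\{+,-,0\}^E$ of (signed) cocircuits satisfying: (CC0) $\mathbf{0}\notin\mathcal{C}^*$; (CC1) $X\in\mathcal{C}^*\Rightarrow -X\in\mathcal{C}^*$; (CC2) if $X,Y\in\mathcal{C}^*$ and $\operatorname{supp}(X)\subseteq\operatorname{supp}(Y)$ then $X=\pm Y$; (CC3) if $X,Y\in\mathcal{C}^*$, $X\neq -Y$ and $e\in S(X,Y)$, then there is $Z\in\mathcal{C}^*$ with $Z^+\subseteq (X^+\cup Y^+)\setminus\{e\}$ and $Z^-\subseteq (X^-\cup Y^-)\setminus\{e\}$. The covectors of $\mathcal{M}$ are $\mathbf{0}$ together with all compositions $X^1\circ\cdots\circ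 X^k$ ($k\ge 1$) of cocircuits, partially ordered componentwise by $0<+$ and $0<-$ ($+,-$ incomparable). The rank $r$ of $\mathcal{M}$ is the largest $k$ such that there is a chain $\mathbf{0}=V_0<V_1<\cdots<V_k$ of covectors. $\mathcal{M}$ is uniform if $|X^0|=r-1$ for every cocircuit $X$. The cocircuit graph $G^*(\mathcal{M})$ has the cocircuits as vertices, with distinct cocircuits $X,Y$ adjacent iff $|X^0\cap Y^0|\ge r-2$ and $S(X,Y)=\emptyset$. $d_{\mathcal{M}}(X,Y)$ denotes graph distance in $G^*(\mathcal{M})$. *)

theory Defs
  imports Main "HOL-Library.Extended_Nat"
begin

datatype sign = Pos | Neg | Zer

type_synonym 'a signvec = "'a \<Rightarrow> sign"

definition sv :: "'a set \<Rightarrow> 'a signvec set" where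
  "sv E = {X. \<forall>e. e \<notin> E \<longrightarrow> X e = Zer}"

definition zerovec :: "'a signvec" where
  "zerovec = (\<lambda>_. Zer)"

definition posp :: "'a signvec \<Rightarrow> 'a set" where "posp X = {e. X e = Pos}"
definition negp :: "'a signvec \<Rightarrow> 'a set" where "negp X = {e. X e = Neg}"
definition zeros :: "'a set \<Rightarrow> 'a signvec \<Rightarrow> 'a set" where
  "zeros E X = {e \<in> E. X e = Zer}"
definition supp :: "'a signvec \<Rightarrow> 'a set" where "supp X = posp X \<union> negp X"

definition negsv :: "'a signvec \<Rightarrow> 'a signvec" where
  "negsv X = (\<lambda>e. case X e of Pos \<Rightarrow> Neg | Neg \<Rightarrow> Pos | Zer \<Rightarrow> Zer)"

definition sep :: "'a signvec \<Rightarrow> 'a signvec \<Rightarrow> 'a set" where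
  "sep X Y = (posp X \<inter> negp Y) \<union> (negp X \<inter> posp Y)"

definition comp :: "'a signvec \<Rightarrow> 'a signvec \<Rightarrow> 'a signvec" where
  "comp X Y = (\<lambda>e. if X e \<noteq> Zer then X e else Y e)"

definition oriented_matroid :: "'a set \<Rightarrow> 'a signvec set \<Rightarrow> bool" where
  "oriented_matroid E C \<longleftrightarrow> finite E \<and> C \<subseteq> sv E \<and>
     zerovec \<notin> C \<and>
     (\<forall>X\<in>C. negsv X \<in> C) \<and>
     (\<forall>X\<in>C. \<forall>Y\<in>C. supp X \<subseteq> supp Y \<longrightarrow> X = Y \<or> X = negsv Y) \<and>
     (\<forall>X\<in>C. \<forall>Y\<in>C. \<forall>e. X \<noteq> negsv Y \<and> e \<in> sep X Y \<longrightarrow>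
        (\<exists>Z\<in>C. posp Z \<subseteq> (posp X \<union> posp Y) - {e} \<and> negp Z \<subseteq> (negp X \<union> negp Y) - {e}))"

definition covectors :: "'a signvec set \<Rightarrow> 'a signvec set" where
  "covectors C = insert zerovec {foldr comp Xs zerovec | Xs. Xs \<noteq> [] \<and> set Xs \<subseteq> C}"

definition sign_le :: "sign \<Rightarrow> sign \<Rightarrow> bool" where
  "sign_le a b \<longleftrightarrow> a = Zer \<or> a = b"

definition sv_le :: "'a signvec \<Rightarrow> 'a signvec \<Rightarrow> bool" where
  "sv_le X Y \<longleftrightarrow> (\<forall>e. sign_le (X e) (Y e))"

definition sv_less :: "'a signvec \<Rightarrow> 'a signvec \<Rightarrow> bool" where
  "sv_less X Y \<longleftrightarrow> sv_le X Y \<and> X \<noteq> Y"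

definition has_chain :: "'a signvec set \<Rightarrow> nat \<Rightarrow> bool" where
  "has_chain C k \<longleftrightarrow> (\<exists>V :: nat \<Rightarrow> 'a signvec. V 0 = zerovec \<and>
      (\<forall>i\<le>k. V i \<in> covectors C) \<and> (\<forall>i<k. sv_less (V i) (V (Suc i))))"

definition om_rank :: "'a signvec set \<Rightarrow> nat" where
  "om_rank C = (GREATEST k. has_chain C k)"

definition uniform_om :: "'a set \<Rightarrow> 'a signvec set \<Rightarrow> bool" where
  "uniform_om E C \<longleftrightarrow> (\<forall>X\<in>C. card (zeros E X) = om_rank C - 1)"

definition cg_adj :: "'a set \<Rightarrow> 'a signvec set \<Rightarrow> 'a signvec \<Rightarrow> 'a signvec \<Rightarrow> bool" where
  "cg_adj E C X Y \<longleftrightarrow> X \<in> C \<and> Y \<in> C \<and> X \<noteq> Y \<and>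
     card (zeros E X \<inter> zeros E Y) \<ge> om_rank C - 2 \<and> sep X Y = {}"

definition cg_walk :: "'a set \<Rightarrow> 'a signvec set \<Rightarrow> 'a signvec list \<Rightarrow> bool" where
  "cg_walk E C ps \<longleftrightarrow> ps \<noteq> [] \<and> set ps \<subseteq> C \<and>
     (\<forall>i. Suc i < length ps \<longrightarrow> cg_adj E C (ps ! i) (ps ! Suc i))"

text \<open>Graph distance in the cocircuit graph (infinity if not connected).\<close>
definition cg_dist :: "'a set \<Rightarrow> 'a signvec set \<Rightarrow> 'a signvec \<Rightarrow> 'a signvec \<Rightarrow> enat" where
  "cg_dist E C X Y = (INF ps \<in> {ps. cg_walk E C ps \<and> hd ps = X \<and> last ps = Y}.
       enat (length ps - 1))"

end

theory Submission
  imports Defs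
begin


lemma negsv_negsv[simp]: "negsv (negsv X) = X"
  by (auto simp: negsv_def fun_eq_iff split: sign.splits)

lemma negsv_Zer[simp]: "(negsv X e = Zer) = (X e = Zer)"
  by (auto simp: negsv_def split: sign.splits)

lemma zeros_negsv[simp]: "zeros E (negsv X) = zeros E X"
  by (auto simp: zeros_def)

lemma sep_sym: "sep X Y = sep Y X"
  by (auto simp: sep_def)

lemma sep_iff: "e \<in> sep X Y \<longleftrightarrow> (X e = Pos \<and> Y e = Neg) \<or> (X e = Neg \<and> Y e = Pos)"
  by (auto simp: sep_def posp_def negp_def)

lemma cg_walk_single: "cg_walk E C [x] \<longleftrightarrow> x \<in> C"
  by (auto simp: cg_walk_def)

lemma cg_walk_cons2: "cg_walk E C (x # y # rest) \<longleftrightarrow> cg_adj E C x y \<and> cg_walk E C (y # rest)"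
proof
  assume a: "cg_walk E C (x # y # rest)"
  hence "cg_adj E C x y" by (auto simp: cg_walk_def)
  moreover have "cg_walk E C (y # rest)"
    using a unfolding cg_walk_def
    by (metis Suc_less_eq insert_subset list.distinct(1) list.simps(15) nth_Cons_Suc length_Cons)
  ultimately show "cg_adj E C x y \<and> cg_walk E C (y # rest)" by simp
next
  assume a: "cg_adj E C x y \<and> cg_walk E C (y # rest)"
  show "cg_walk E C (x # y # rest)"
    unfolding cg_walk_def
  proof (intro conjI allI impI)
    show "set (x # y # rest) \<subseteq> C" using a by (auto simp: cg_walk_def cg_adj_def)
    fix i assume "Suc i < length (x # y # rest)"
    then show "cg_adj E C ((x # y # rest) ! i) ((x # y # rest) ! Suc i)"
      using a by (cases i) (auto simp: cg_walk_def)
  qed simp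
qed

lemma cg_walk_append:
  "cg_walk E C ps \<Longrightarrow> cg_walk E C qs \<Longrightarrow> last ps = hd qs \<Longrightarrow> cg_walk E C (ps @ tl qs)"
proof (induction ps rule: induct_list012)
  case 1 then show ?case by (simp add: cg_walk_def)
next
  case (2 x) then show ?case by (cases qs) auto
next
  case (3 x y zs)
  then show ?case by (simp add: cg_walk_cons2)
qed

definition reach :: "'a set \<Rightarrow> 'a signvec set \<Rightarrow> nat \<Rightarrow> 'a signvec \<Rightarrow> 'a signvec \<Rightarrow> bool" where
  "reach E C k X Y \<longleftrightarrow> (\<exists>ps. cg_walk E C ps \<and> hd ps = X \<and> last ps = Y \<and> length ps \<le> Suc k)"

lemma reach_mono: "reach E C k X Y \<Longrightarrow> k \<le> m \<Longrightarrow> reach E C m X Y"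
  unfolding reach_def by force

lemma reach_trans: "reach E C k X Y \<Longrightarrow> reach E C m Y Z \<Longrightarrow> reach E C (k + m) X Z"
proof -
  assume "reach E C k X Y" "reach E C m Y Z"
  then obtain ps qs where p: "cg_walk E C ps" "hd ps = X" "last ps = Y" "length ps \<le> Suc k"
    and q: "cg_walk E C qs" "hd qs = Y" "last qs = Z" "length qs \<le> Suc m"
    unfolding reach_def by blast
  have ne: "ps \<noteq> []" "qs \<noteq> []" using p q by (auto simp: cg_walk_def)
  have "cg_walk E C (ps @ tl qs)" using cg_walk_append[OF p(1) q(1)] p q by simp
  moreover have "hd (ps @ tl qs) = X" using p ne by simp
  moreover have "last (ps @ tl qs) = Z"
    using p q ne by (cases qs) (auto simp: last_append)
  moreover have "length (ps @ tl qs) \<le> Suc (k + m)" using p q ne by (cases qs) auto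
  ultimately show ?thesis unfolding reach_def by blast
qed

lemma reach_adj: "cg_adj E C X Y \<Longrightarrow> reach E C 1 X Y"
  unfolding reach_def
  by (rule exI[of _ "[X, Y]"]) (auto simp: cg_walk_cons2 cg_walk_single cg_adj_def)

lemma reach_dist: "reach E C k X Y \<Longrightarrow> cg_dist E C X Y \<le> enat k"
proof -
  assume "reach E C k X Y"
  then obtain ps where p: "cg_walk E C ps" "hd ps = X" "last ps = Y" "length ps \<le> Suc k"
    unfolding reach_def by blast
  hence "cg_dist E C X Y \<le> enat (length ps - 1)"
    unfolding cg_dist_def by (intro INF_lower) auto
  also have "\<dots> \<le> enat k" using p(4) by simp
  finally show ?thesis .
qed

lemma exch_inner:
  assumes fin: "finite E"
    and Hsub: "\<And>h. h \<in> H \<Longrightarrow> h \<subseteq> E \<and> card h = k"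
    and Helim: "\<And>h1 h2 e. h1 \<in> H \<Longrightarrow> h2 \<in> H \<Longrightarrow> h1 \<noteq> h2 \<Longrightarrow> e \<in> E \<Longrightarrow> e \<notin> h1 \<Longrightarrow> e \<notin> h2 \<Longrightarrow> \<exists>h\<in>H. insert e (h1 \<inter> h2) \<subseteq> h"
    and up: "\<And>S'. S' \<subseteq> E \<Longrightarrow> card S' = k \<Longrightarrow> insert p K \<subseteq> S' \<Longrightarrow> S' \<in> H"
    and pE: "p \<in> E"
    and S: "S \<subseteq> E" "card S = k" "K \<subseteq> S" "p \<notin> S"
  shows "Q \<in> H \<Longrightarrow> K \<subseteq> Q \<Longrightarrow> p \<notin> Q \<Longrightarrow> S \<in> H"
proof (induction "card (S - Q)" arbitrary: Q)
  case 0
  have fS: "finite S" using S fin finite_subset by blast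
  have "S \<subseteq> Q" using 0 fS by auto
  moreover have "finite Q" "card Q = k" using Hsub[OF 0(2)] fin finite_subset by auto
  ultimately have "S = Q" using S by (metis card_subset_eq)
  then show ?case using 0 by simp
next
  case (Suc n)
  have fS: "finite S" using S fin finite_subset by blast
  have QE: "Q \<subseteq> E" and cQ: "card Q = k" using Hsub[OF Suc(3)] by auto
  have fQ: "finite Q" using QE fin finite_subset by blast
  obtain e where e: "e \<in> S" "e \<notin> Q" using Suc(2)
    by (metis Diff_eq_empty_iff card.empty nat.simps(3) subsetI)
  have "\<not> Q \<subseteq> S"
  proof
    assume "Q \<subseteq> S"
    hence "Q = S" using card_subset_eq fS cQ S(2) by metis
    thus False using e by simp
  qed
  then obtain q where q: "q \<in> Q" "q \<notin> S" by blast
  have qK: "q \<notin> K" using q S by auto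
  define H1 where "H1 = insert p (Q - {q})"
  have "H1 \<in> H"
  proof (rule up)
    show "H1 \<subseteq> E" using QE pE by (auto simp: H1_def)
    have "k > 0" using cQ fQ q card_gt_0_iff by blast
    then show "card H1 = k" using cQ fQ q Suc(5) by (simp add: H1_def card_Diff_singleton)
    show "insert p K \<subseteq> H1" using Suc(4) qK by (auto simp: H1_def)
  qed
  moreover have "H1 \<noteq> Q" using Suc(5) by (auto simp: H1_def)
  moreover have "e \<in> E" "e \<notin> H1" using e S by (auto simp: H1_def)
  ultimately obtain h where h: "h \<in> H" "insert e (H1 \<inter> Q) \<subseteq> h"
    using Helim[of H1 Q e] Suc(3) e by blast
  have HQ: "H1 \<inter> Q = Q - {q}" using Suc(5) by (auto simp: H1_def)
  define Q' where "Q' = insert e (Q - {q})"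
  have "Q' \<subseteq> h" using h HQ by (simp add: Q'_def)
  moreover have "k > 0" using cQ fQ q card_gt_0_iff by blast
  moreover have "card Q' = k" using cQ fQ q e \<open>k > 0\<close> by (simp add: Q'_def card_Diff_singleton)
  moreover have "finite h" "card h = k" using Hsub[OF h(1)] fin finite_subset by auto
  ultimately have "Q' = h" by (metis card_subset_eq)
  hence Q'H: "Q' \<in> H" using h by simp
  have "S - Q' = (S - Q) - {e}" using q by (auto simp: Q'_def)
  hence "card (S - Q') = n" using Suc(2) e by simp
  then show ?case using Suc(1)[of Q'] Q'H Suc(4) qK Suc(5) e S
    by (auto simp: Q'_def)
qed




lemma exch_all:
  assumes fin: "finite E"
    and Hsub: "\<And>h. h \<in> H \<Longrightarrow> h \<subseteq> E \<and> card h = k"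
    and Helim: "\<And>h1 h2 e. h1 \<in> H \<Longrightarrow> h2 \<in> H \<Longrightarrow> h1 \<noteq> h2 \<Longrightarrow> e \<in> E \<Longrightarrow> e \<notin> h1 \<Longrightarrow> e \<notin> h2 \<Longrightarrow> \<exists>h\<in>H. insert e (h1 \<inter> h2) \<subseteq> h"
    and Gcard: "\<And>j. j \<le> k \<Longrightarrow> card (G j) = j"
    and Gmono: "\<And>j. j < k \<Longrightarrow> G j \<subseteq> G (Suc j)"
    and Gclosed: "\<And>j y. j \<le> k \<Longrightarrow> y \<in> E \<Longrightarrow> y \<notin> G j \<Longrightarrow> \<exists>h\<in>H. G j \<subseteq> h \<and> y \<notin> h"
    and Gex: "\<And>j. j \<le> k \<Longrightarrow> \<exists>h\<in>H. G j \<subseteq> h"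
    and S: "S \<subseteq> E" "card S = k"
  shows "S \<in> H"
proof -
  have GE: "j \<le> k \<Longrightarrow> G j \<subseteq> E" for j using Gex Hsub by blast
  have Gfin: "j \<le> k \<Longrightarrow> finite (G j)" for j using GE fin finite_subset by blast
  have main: "m \<le> k \<Longrightarrow> \<forall>S. S \<subseteq> E \<longrightarrow> card S = k \<longrightarrow> G (k - m) \<subseteq> S \<longrightarrow> S \<in> H" for m
  proof (induction m)
    case 0
    show ?case
    proof (intro allI impI)
      fix S assume a: "S \<subseteq> E" "card S = k" "G (k - 0) \<subseteq> S"
      obtain h where h: "h \<in> H" "G k \<subseteq> h" using Gex by blast
      have "finite h" "card h = k" using Hsub[OF h(1)] fin finite_subset by auto
      hence "G k = h" using h Gcard[of k] by (metis card_subset_eq order_refl)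
      moreover have "finite S" using a fin finite_subset by blast
      ultimately have "G k = S" using a Gcard[of k] by (metis card_subset_eq diff_zero order_refl)
      then show "S \<in> H" using \<open>G k = h\<close> h by simp
    qed
  next
    case (Suc m)
    define j' where "j' = k - Suc m"
    have jj: "k - m = Suc j'" "j' < k" using Suc(2) by (auto simp: j'_def)
    have sub: "G j' \<subseteq> G (Suc j')" using Gmono jj by simp
    have "card (G (Suc j') - G j') = 1"
      using card_Diff_subset[OF Gfin sub] Gcard[of j'] Gcard[of "Suc j'"] jj by simp
    then obtain p where p1: "G (Suc j') - G j' = {p}" by (meson card_1_singletonE)
    have pnot: "p \<notin> G j'" using p1 by auto
    have Gs: "G (Suc j') = insert p (G j')" using p1 sub by auto
    have pE: "p \<in> E" using GE[of "Suc j'"] Gs jj by auto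
    obtain Q where Q: "Q \<in> H" "G j' \<subseteq> Q" "p \<notin> Q" using Gclosed[of j' p] pE pnot jj by auto
    have IH: "\<forall>S. S \<subseteq> E \<longrightarrow> card S = k \<longrightarrow> insert p (G j') \<subseteq> S \<longrightarrow> S \<in> H"
      using Suc(1) Suc(2) jj Gs by simp
    show ?case
    proof (intro allI impI)
      fix S assume a: "S \<subseteq> E" "card S = k" "G (k - Suc m) \<subseteq> S"
      hence a3: "G j' \<subseteq> S" by (simp add: j'_def)
      show "S \<in> H"
      proof (cases "p \<in> S")
        case True then show ?thesis using IH a a3 by auto
      next
        case False
        show ?thesis
          by (rule exch_inner[OF fin Hsub Helim _ pE a(1) a(2) a3 False Q])
             (use IH in auto)
      qed
    qed
  qed
  have "G 0 = {}" using Gcard[of 0] Gfin[of 0] by simp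
  then show ?thesis using main[of k] S by simp
qed




lemma foldr_comp_Zer: "foldr comp Xs zerovec e = Zer \<longleftrightarrow> (\<forall>X\<in>set Xs. X e = Zer)"
  by (induction Xs) (auto simp: comp_def zerovec_def)

lemma foldr_comp_sv: "set Xs \<subseteq> sv E \<Longrightarrow> foldr comp Xs zerovec \<in> sv E"
  by (induction Xs) (auto simp: comp_def zerovec_def sv_def)

lemma dec_seq: "(\<And>i. i < k \<Longrightarrow> (f (Suc i) :: nat) < f i) \<Longrightarrow> i \<le> j \<Longrightarrow> j \<le> k \<Longrightarrow> f j + (j - i) \<le> f i"
proof (induction j)
  case 0 then show ?case by simp
next
  case (Suc j)
  show ?case
  proof (cases "i = Suc j")
    case True then show ?thesis by simp
  next
    case False
    hence "i \<le> j" using Suc by simp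
    hence "f j + (j - i) \<le> f i" using Suc by simp
    moreover have "f (Suc j) < f j" using Suc by simp
    ultimately show ?thesis using \<open>i \<le> j\<close> by simp
  qed
qed

lemma sv_less_zeros:
  assumes "V \<in> sv E" "W \<in> sv E" "sv_less V W"
  shows "zeros E W \<subset> zeros E V"
proof -
  have le: "\<And>e. V e = Zer \<or> V e = W e" using assms(3) by (auto simp: sv_less_def sv_le_def sign_le_def)
  have sub: "zeros E W \<subseteq> zeros E V" unfolding zeros_def by (auto, metis le)
  moreover have "zeros E W \<noteq> zeros E V"
  proof
    assume eq: "zeros E W = zeros E V"
    have "V = W"
    proof
      fix e
      show "V e = W e"
      proof (cases "e \<in> E")
        case True
        have "W e = Zer \<longleftrightarrow> V e = Zer" using True eq by (auto simp: zeros_def set_eq_iff)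
        then show ?thesis using le[of e] by auto
      next
        case False
        then show ?thesis using assms(1,2) by (auto simp: sv_def)
      qed
    qed
    thus False using assms(3) by (simp add: sv_less_def)
  qed
  ultimately show ?thesis by blast
qed

locale unif =
  fixes E :: "'a set" and C :: "'a signvec set" and r :: nat
  assumes om: "oriented_matroid E C" and rk: "om_rank C = r" and r3: "r \<ge> 3"
    and unif: "uniform_om E C"
begin

lemma finE: "finite E" using om by (simp add: oriented_matroid_def)
lemma Csv: "X \<in> C \<Longrightarrow> X \<in> sv E" using om by (auto simp: oriented_matroid_def)
lemma negC: "X \<in> C \<Longrightarrow> negsv X \<in> C" using om by (auto simp: oriented_matroid_def)
lemma outE: "X \<in> C \<Longrightarrow> e \<notin> E \<Longrightarrow> X e = Zer" using Csv by (auto simp: sv_def)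
lemma elim:
  assumes "X \<in> C" "Y \<in> C" "X \<noteq> negsv Y" "e \<in> sep X Y"
  shows "\<exists>Z\<in>C. (\<forall>f. Z f = Pos \<longrightarrow> (X f = Pos \<or> Y f = Pos) \<and> f \<noteq> e) \<and>
                  (\<forall>f. Z f = Neg \<longrightarrow> (X f = Neg \<or> Y f = Neg) \<and> f \<noteq> e)"
proof -
  obtain Z where "Z \<in> C" "posp Z \<subseteq> (posp X \<union> posp Y) - {e}" "negp Z \<subseteq> (negp X \<union> negp Y) - {e}"
    using om assms unfolding oriented_matroid_def by meson
  then show ?thesis by (auto simp: posp_def negp_def)
qed

lemma cardZ: "X \<in> C \<Longrightarrow> card (zeros E X) = r - 1"
  using unif rk by (simp add: uniform_om_def)

lemma zerosE: "zeros E X \<subseteq> E" by (auto simp: zeros_def)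
lemma finZ: "finite (zeros E X)" using finE finite_subset zerosE by blast

lemma cov_sv: "V \<in> covectors C \<Longrightarrow> V \<in> sv E"
proof -
  assume "V \<in> covectors C"
  then consider "V = zerovec" | Xs where "V = foldr comp Xs zerovec" "set Xs \<subseteq> C"
    by (auto simp: covectors_def)
  then show ?thesis
  proof cases
    case 1 then show ?thesis by (simp add: sv_def zerovec_def)
  next
    case 2
    hence "set Xs \<subseteq> sv E" using Csv by auto
    then show ?thesis using foldr_comp_sv 2 by simp
  qed
qed

lemma cov_rep: "V \<in> covectors C \<Longrightarrow> V \<noteq> zerovec \<Longrightarrow>
   \<exists>Xs. Xs \<noteq> [] \<and> set Xs \<subseteq> C \<and> (\<forall>e. V e = Zer \<longleftrightarrow> (\<forall>X\<in>set Xs. X e = Zer))"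
  by (auto simp: covectors_def foldr_comp_Zer)

lemma zeros_zerovec: "zeros E zerovec = E" by (auto simp: zeros_def zerovec_def)

lemma chain_dec:
  assumes "V 0 = zerovec" "\<forall>i\<le>k. V i \<in> covectors C" "\<forall>i<k. sv_less (V i) (V (Suc i))"
  shows "\<And>i. i < k \<Longrightarrow> card (zeros E (V (Suc i))) < card (zeros E (V i))"
    and "\<And>i. i < k \<Longrightarrow> zeros E (V (Suc i)) \<subset> zeros E (V i)"
proof -
  fix i assume i: "i < k"
  show "zeros E (V (Suc i)) \<subset> zeros E (V i)"
    using sv_less_zeros[of "V i" E "V (Suc i)"] cov_sv assms i by auto
  then show "card (zeros E (V (Suc i))) < card (zeros E (V i))"
    using finZ psubset_card_mono by blast
qed

lemma chain_bound: "has_chain C k \<Longrightarrow> k \<le> card E"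
proof -
  assume "has_chain C k"
  then obtain V where V: "V 0 = zerovec" "\<forall>i\<le>k. V i \<in> covectors C" "\<forall>i<k. sv_less (V i) (V (Suc i))"
    unfolding has_chain_def by blast
  have "card (zeros E (V k)) + (k - 0) \<le> card (zeros E (V 0))"
    by (rule dec_seq[of k "\<lambda>i. card (zeros E (V i))"]) (use chain_dec[OF V] in auto)
  then show ?thesis using V(1) zeros_zerovec by simp
qed

lemma has_chain_r: "has_chain C r"
proof -
  have "has_chain C 0" unfolding has_chain_def
    by (rule exI[of _ "\<lambda>_. zerovec"]) (auto simp: covectors_def)
  then have "has_chain C (GREATEST k. has_chain C k)"
    by (rule GreatestI_nat) (use chain_bound in blast)
  then show ?thesis using rk by (simp add: om_rank_def)
qed

lemma all_hyperplanes:
  assumes S: "S \<subseteq> E" "card S = r - 1"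
  shows "\<exists>X\<in>C. zeros E X = S"
proof -
  obtain V where V: "V 0 = zerovec" "\<forall>i\<le>r. V i \<in> covectors C" "\<forall>i<r. sv_less (V i) (V (Suc i))"
    using has_chain_r unfolding has_chain_def by blast
  define f where "f i = card (zeros E (V i))" for i
  have fdec: "\<And>i. i < r \<Longrightarrow> f (Suc i) < f i" using chain_dec(1)[OF V] by (simp add: f_def)
  have psub: "\<And>i. i < r \<Longrightarrow> zeros E (V (Suc i)) \<subset> zeros E (V i)" using chain_dec(2)[OF V] by simp
  have nz: "V i \<noteq> zerovec" if "1 \<le> i" "i \<le> r" for i
  proof
    assume "V i = zerovec"
    have "f i + (i - 0) \<le> f 0" using dec_seq[of r f 0 i] fdec that by simp
    thus False using \<open>V i = zerovec\<close> V(1) that by (simp add: f_def)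
  qed
  have rep: "\<exists>Xs. Xs \<noteq> [] \<and> set Xs \<subseteq> C \<and> (\<forall>e. V i e = Zer \<longleftrightarrow> (\<forall>X\<in>set Xs. X e = Zer))"
    if "1 \<le> i" "i \<le> r" for i
    using cov_rep V(2) nz that by blast
  have f1: "f 1 \<le> r - 1"
  proof -
    obtain Xs where Xs: "Xs \<noteq> []" "set Xs \<subseteq> C" "\<forall>e. V 1 e = Zer \<longleftrightarrow> (\<forall>X\<in>set Xs. X e = Zer)"
      using rep[of 1] r3 by auto
    have "zeros E (V 1) \<subseteq> zeros E (hd Xs)" using Xs by (auto simp: zeros_def)
    hence "f 1 \<le> card (zeros E (hd Xs))" using finZ by (simp add: f_def card_mono)
    also have "\<dots> = r - 1" using cardZ Xs by (simp add: subset_iff)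
    finally show ?thesis .
  qed
  have fval: "f i = r - i" if "1 \<le> i" "i \<le> r" for i
  proof -
    have "f r + (r - i) \<le> f i" using dec_seq[of r f i r] fdec that by simp
    moreover have "f i + (i - 1) \<le> f 1" using dec_seq[of r f 1 i] fdec that by simp
    ultimately show ?thesis using f1 that by linarith
  qed
  define G where "G j = zeros E (V (r - j))" for j
  define H where "H = zeros E ` C"
  show ?thesis
  proof -
    have "S \<in> H"
    proof (rule exch_all[OF finE, of H "r - 1" G])
      show "\<And>h. h \<in> H \<Longrightarrow> h \<subseteq> E \<and> card h = r - 1" using cardZ zerosE by (auto simp: H_def)
      show "\<exists>h\<in>H. insert e (h1 \<inter> h2) \<subseteq> h"
        if h: "h1 \<in> H" "h2 \<in> H" "h1 \<noteq> h2" "e \<in> E" "e \<notin> h1" "e \<notin> h2" for h1 h2 e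
      proof -
        obtain X Y where XY: "X \<in> C" "Y \<in> C" "h1 = zeros E X" "h2 = zeros E Y" using h H_def by auto
        have Xe: "X e \<noteq> Zer" "Y e \<noteq> Zer" using h XY by (auto simp: zeros_def)
        define Y' where "Y' = (if e \<in> sep X Y then Y else negsv Y)"
        have Y'C: "Y' \<in> C" using XY negC by (simp add: Y'_def)
        have Y'z: "zeros E Y' = h2" using XY by (simp add: Y'_def)
        have Y'Z: "\<And>f. Y' f = Zer \<longleftrightarrow> Y f = Zer" by (simp add: Y'_def)
        have sepe: "e \<in> sep X Y'" using Xe
          by (cases "X e"; cases "Y e") (auto simp: Y'_def sep_iff negsv_def)
        have "X \<noteq> negsv Y'"
        proof
          assume "X = negsv Y'"
          hence "h1 = h2" using XY Y'z by simp
          thus False using h by simp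
        qed
        then obtain Z where Z: "Z \<in> C" "\<forall>f. Z f = Pos \<longrightarrow> (X f = Pos \<or> Y' f = Pos) \<and> f \<noteq> e"
            "\<forall>f. Z f = Neg \<longrightarrow> (X f = Neg \<or> Y' f = Neg) \<and> f \<noteq> e"
          using elim[OF XY(1) Y'C _ sepe] by blast
        have "insert e (h1 \<inter> h2) \<subseteq> zeros E Z"
        proof
          fix f assume f: "f \<in> insert e (h1 \<inter> h2)"
          hence fE: "f \<in> E" using h XY zerosE by auto
          have "Z f \<noteq> Pos \<and> Z f \<noteq> Neg"
          proof (cases "f = e")
            case True then show ?thesis using Z(2,3) by auto
          next
            case False
            have fX: "X f = Zer" and fY: "Y' f = Zer"
              using f False XY Y'Z by (auto simp: zeros_def)
            then show ?thesis using Z(2,3) by auto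
          qed
          hence "Z f \<noteq> Pos" "Z f \<noteq> Neg" by auto
          then show "f \<in> zeros E Z" using fE by (cases "Z f") (auto simp: zeros_def)
        qed
        then show ?thesis using Z by (auto simp: H_def)
      qed
      show "card (G j) = j" if "j \<le> r - 1" for j
        using fval[of "r - j"] that r3 by (simp add: G_def f_def)
      show "G j \<subseteq> G (Suc j)" if "j < r - 1" for j
      proof -
        have "r - j = Suc (r - Suc j)" using that by simp
        then show ?thesis using psub[of "r - Suc j"] that by (simp add: G_def)
      qed
      show "\<exists>h\<in>H. G j \<subseteq> h \<and> y \<notin> h" if jr: "j \<le> r - 1" "y \<in> E" "y \<notin> G j" for j y
      proof -
        have "1 \<le> r - j" "r - j \<le> r" using jr r3 by auto
        then obtain Xs where Xs: "Xs \<noteq> []" "set Xs \<subseteq> C" "\<forall>e. V (r - j) e = Zer \<longleftrightarrow> (\<forall>X\<in>set Xs. X e = Zer)"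
          using rep[of "r - j"] by blast
        obtain X where X: "X \<in> set Xs" "X y \<noteq> Zer" using Xs jr by (auto simp: G_def zeros_def)
        have "G j \<subseteq> zeros E X" using Xs X by (auto simp: G_def zeros_def)
        moreover have "y \<notin> zeros E X" using X by (auto simp: zeros_def)
        ultimately show ?thesis using X Xs by (auto simp: H_def)
      qed
      show "\<exists>h\<in>H. G j \<subseteq> h" if jr: "j \<le> r - 1" for j
      proof -
        have "1 \<le> r - j" "r - j \<le> r" using jr r3 by auto
        then obtain Xs where Xs: "Xs \<noteq> []" "set Xs \<subseteq> C" "\<forall>e. V (r - j) e = Zer \<longleftrightarrow> (\<forall>X\<in>set Xs. X e = Zer)"
          using rep[of "r - j"] by blast
        have "G j \<subseteq> zeros E (hd Xs)" using Xs by (auto simp: G_def zeros_def)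
        moreover have "hd Xs \<in> C" using Xs hd_in_set by blast
        ultimately show ?thesis by (auto simp: H_def)
      qed
    qed (use S in auto)
    then show ?thesis by (auto simp: H_def)
  qed
qed

end



context unif begin

lemma sepE: "X \<in> C \<Longrightarrow> sep X Y \<subseteq> E"
  using outE by (force simp: sep_iff)

lemma finsep: "X \<in> C \<Longrightarrow> finite (sep X Y)"
  using sepE finE finite_subset by blast

lemma nzE: "X \<in> C \<Longrightarrow> X e \<noteq> Zer \<Longrightarrow> e \<in> E"
  using outE by blast

lemma card_int2: "X \<in> C \<Longrightarrow> Y \<in> C \<Longrightarrow> card (zeros E X - zeros E Y) = 1 \<Longrightarrow>
   card (zeros E X \<inter> zeros E Y) = r - 2"
proof -
  assume a: "X \<in> C" "Y \<in> C" "card (zeros E X - zeros E Y) = 1"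
  have "card (zeros E X - zeros E Y) = card (zeros E X) - card (zeros E X \<inter> zeros E Y)"
    by (rule card_Diff_subset_Int) (use finZ in auto)
  moreover have "card (zeros E X \<inter> zeros E Y) \<le> card (zeros E X)"
    by (rule card_mono) (use finZ in auto)
  ultimately show ?thesis using a cardZ r3 by simp
qed

lemma line: "X \<in> C \<Longrightarrow> Y \<in> C \<Longrightarrow> card (zeros E X - zeros E Y) = 1 \<Longrightarrow>
   reach E C (card (sep X Y) + 1) X Y"
proof (induction "card (sep X Y)" arbitrary: X Y rule: less_induct)
  case less
  have int2: "card (zeros E X \<inter> zeros E Y) = r - 2" using card_int2 less by blast
  have dz: "zeros E X \<noteq> zeros E Y" using less(4) by auto
  show ?case
  proof (cases "sep X Y = {}")
    case True
    have "cg_adj E C X Y" using less True int2 dz rk by (auto simp: cg_adj_def)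
    then show ?thesis using reach_adj reach_mono by fastforce
  next
    case False
    then obtain e where e: "e \<in> sep X Y" by blast
    have Xe: "X e \<noteq> Zer" "Y e \<noteq> Zer" using e by (auto simp: sep_iff)
    have eE: "e \<in> E" using nzE less(2) Xe by blast
    have "X \<noteq> negsv Y" using dz by auto
    then obtain W where W: "W \<in> C" "\<forall>f. W f = Pos \<longrightarrow> (X f = Pos \<or> Y f = Pos) \<and> f \<noteq> e"
        "\<forall>f. W f = Neg \<longrightarrow> (X f = Neg \<or> Y f = Neg) \<and> f \<noteq> e"
      using elim less(2,3) e by blast
    have sub: "insert e (zeros E X \<inter> zeros E Y) \<subseteq> zeros E W"
    proof
      fix f assume f: "f \<in> insert e (zeros E X \<inter> zeros E Y)"
      have "W f \<noteq> Pos \<and> W f \<noteq> Neg"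
      proof (cases "f = e")
        case True then show ?thesis using W by auto
      next
        case False
        then have "X f = Zer" "Y f = Zer" using f by (auto simp: zeros_def)
        then show ?thesis using W by auto
      qed
      moreover have "f \<in> E" using f eE by (auto simp: zeros_def)
      ultimately show "f \<in> zeros E W" by (cases "W f") (auto simp: zeros_def)
    qed
    have eZ: "e \<notin> zeros E X" "e \<notin> zeros E Y" using Xe by (auto simp: zeros_def)
    have "card (insert e (zeros E X \<inter> zeros E Y)) = r - 1"
      using int2 eZ finZ r3 by simp
    hence ZW: "zeros E W = insert e (zeros E X \<inter> zeros E Y)"
      using sub cardZ[OF W(1)] finZ by (metis card_subset_eq)
    have c1: "card (zeros E X - zeros E W) = 1"
    proof -
      have "zeros E X - zeros E W = zeros E X - zeros E Y" using ZW eZ by auto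
      then show ?thesis using less(4) by simp
    qed
    have c2: "card (zeros E W - zeros E Y) = 1"
    proof -
      have "zeros E W - zeros E Y = {e}" using ZW eZ by auto
      then show ?thesis by simp
    qed
    have pw: "W x = Pos \<longrightarrow> (X x = Pos \<or> Y x = Pos) \<and> x \<noteq> e"
        "W x = Neg \<longrightarrow> (X x = Neg \<or> Y x = Neg) \<and> x \<noteq> e" for x
      using W by blast+
    have s1: "sep X W \<subseteq> sep X Y - {e}"
    proof
      fix x assume "x \<in> sep X W" then show "x \<in> sep X Y - {e}"
        using pw[of x] by (cases "X x"; cases "Y x"; cases "W x") (auto simp: sep_iff)
    qed
    have s2: "sep W Y \<subseteq> sep X Y - {e}"
    proof
      fix x assume "x \<in> sep W Y" then show "x \<in> sep X Y - {e}"
        using pw[of x] by (cases "X x"; cases "Y x"; cases "W x") (auto simp: sep_iff)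
    qed
    have dj: "sep X W \<inter> sep W Y = {}"
    proof (rule ccontr)
      assume "sep X W \<inter> sep W Y \<noteq> {}"
      then obtain x where "x \<in> sep X W" "x \<in> sep W Y" by blast
      then show False
        using pw[of x] by (cases "X x"; cases "Y x"; cases "W x") (auto simp: sep_iff)
    qed
    have fs: "finite (sep X Y)" using finsep less by blast
    have "card (sep X W) + card (sep W Y) = card (sep X W \<union> sep W Y)"
      using dj fs s1 s2 by (metis card_Un_disjoint finite_Diff finite_subset)
    also have "\<dots> \<le> card (sep X Y - {e})" using s1 s2 fs by (intro card_mono) auto
    also have "\<dots> = card (sep X Y) - 1" using e by simp
    finally have tot: "card (sep X W) + card (sep W Y) \<le> card (sep X Y) - 1" .
    have pos: "card (sep X Y) > 0" using fs e card_gt_0_iff by blast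
    have r1: "reach E C (card (sep X W) + 1) X W"
      using less(1)[of X W] tot pos less(2) W(1) c1 by simp
    have r2: "reach E C (card (sep W Y) + 1) W Y"
      using less(1)[of W Y] tot pos less(3) W(1) c2 by simp
    have "reach E C (card (sep X W) + 1 + (card (sep W Y) + 1)) X Y"
      using reach_trans[OF r1 r2] .
    then show ?thesis by (rule reach_mono) (use tot pos in simp)
  qed
qed

end


definition ind :: "'a set \<Rightarrow> 'a \<Rightarrow> nat" where "ind S e = (if e \<in> S then 1 else 0)"

lemma card_ind: "finite E \<Longrightarrow> S \<subseteq> E \<Longrightarrow> card S = (\<Sum>e\<in>E. ind S e)"
  unfolding ind_def by (simp add: sum.If_cases Int_absorb1 Int_commute)

lemma even_g:
  assumes "(X e = Zer \<and> Z e = W e) \<or> (W e = Zer \<and> Y e = Zer \<and> Z e = X e) \<or>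
           (X e \<noteq> Zer \<and> Y e \<noteq> Zer \<and> W e \<noteq> Zer \<and> Z e \<noteq> Zer)"
  shows "even (ind (sep X W) e + ind (sep W Y) e + ind (sep X Z) e + ind (sep Z Y) e)"
  using assms by (cases "X e"; cases "Y e"; cases "W e"; cases "Z e") (auto simp: ind_def sep_iff)



context unif begin

lemma pair_sum:
  assumes "X \<in> C" "W \<in> C" "card (zeros E X - zeros E W) = 1"
  shows "card (sep X W) + card (sep X (negsv W)) = card E - r"
proof -
  have un: "sep X W \<union> sep X (negsv W) = E - (zeros E X \<union> zeros E W)"
  proof (rule set_eqI)
    fix e
    have l: "e \<in> sep X W \<union> sep X (negsv W) \<longleftrightarrow> X e \<noteq> Zer \<and> W e \<noteq> Zer"
      by (cases "X e"; cases "W e") (simp_all add: sep_iff negsv_def)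
    have r: "e \<in> E - (zeros E X \<union> zeros E W) \<longleftrightarrow> e \<in> E \<and> X e \<noteq> Zer \<and> W e \<noteq> Zer"
      by (auto simp: zeros_def)
    show "e \<in> sep X W \<union> sep X (negsv W) \<longleftrightarrow> e \<in> E - (zeros E X \<union> zeros E W)"
      using l r nzE[OF assms(1), of e] by blast
  qed
  have dj: "sep X W \<inter> sep X (negsv W) = {}"
    by (auto simp: sep_iff negsv_def split: sign.splits)
  have i2: "card (zeros E X \<inter> zeros E W) = r - 2" using card_int2[OF assms] .
  have "card (zeros E X \<union> zeros E W) + card (zeros E X \<inter> zeros E W) = card (zeros E X) + card (zeros E W)"
    by (rule card_Un_Int[symmetric]) (rule finZ)+
  hence cu: "card (zeros E X \<union> zeros E W) = r" using i2 cardZ assms r3 by simp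
  have "card (sep X W) + card (sep X (negsv W)) = card (sep X W \<union> sep X (negsv W))"
    by (rule card_Un_disjoint[symmetric]) (use dj finsep assms in auto)
  also have "\<dots> = card E - card (zeros E X \<union> zeros E W)"
    unfolding un by (rule card_Diff_subset) (use finZ zerosE in auto)
  also have "\<dots> = card E - r" using cu by simp
  finally show ?thesis .
qed

lemma main:
  assumes XC: "X \<in> C" and YC: "Y \<in> C" and c2: "card (zeros E X - zeros E Y) = 2"
  shows "reach E C (card E - r + 1) X Y"
proof -
  let ?ZX = "zeros E X" and ?ZY = "zeros E Y"
  define A where "A = ?ZX \<inter> ?ZY"
  have cA: "card ?ZX = card A + 2"
  proof -
    have "card (?ZX - ?ZY) = card ?ZX - card A"
      unfolding A_def by (rule card_Diff_subset_Int) (use finZ in auto)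
    moreover have "card A \<le> card ?ZX" unfolding A_def by (rule card_mono) (use finZ in auto)
    ultimately show ?thesis using c2 by simp
  qed
  have c2': "card (?ZY - ?ZX) = 2"
  proof -
    have "card (?ZY - ?ZX) = card ?ZY - card A"
      unfolding A_def by (subst Int_commute, rule card_Diff_subset_Int) (use finZ in auto)
    then show ?thesis using cA cardZ XC YC by simp
  qed
  obtain a b where ab: "?ZX - ?ZY = {a, b}" "a \<noteq> b" using c2 unfolding card_2_iff by blast
  obtain c d where cd: "?ZY - ?ZX = {c, d}" "c \<noteq> d" using c2' unfolding card_2_iff by blast
  have ZX: "?ZX = insert a (insert b A)" using ab by (auto simp: A_def)
  have ZY: "?ZY = insert c (insert d A)" using cd by (auto simp: A_def)
  have nA: "a \<notin> A" "b \<notin> A" "c \<notin> A" "d \<notin> A" using ab cd by (auto simp: A_def)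
  have nXY: "a \<notin> ?ZY" "b \<notin> ?ZY" "c \<notin> ?ZX" "d \<notin> ?ZX" using ab cd by auto
  have inXY: "a \<in> ?ZX" "b \<in> ?ZX" "c \<in> ?ZY" "d \<in> ?ZY" using ab cd by auto
  have inE: "a \<in> E" "b \<in> E" "c \<in> E" "d \<in> E" using inXY zerosE by auto
  have dist: "a \<noteq> c" "a \<noteq> d" "b \<noteq> c" "b \<noteq> d" using nXY inXY by auto
  have finA: "finite A" using finZ by (simp add: A_def)
  have cardA: "card A = r - 3" using cA cardZ[OF XC] by simp
  have AE: "A \<subseteq> E" using zerosE by (auto simp: A_def)
  define S1 where "S1 = insert a (insert c A)"
  have "card S1 = r - 1" using cardA finA nA dist r3 by (simp add: S1_def)
  moreover have "S1 \<subseteq> E" using AE inE by (simp add: S1_def)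
  ultimately obtain W0 where W0: "W0 \<in> C" "zeros E W0 = S1" using all_hyperplanes by blast
  define W1 where "W1 = (if W0 d = X d then negsv W0 else W0)"
  have W1C: "W1 \<in> C" using W0 negC by (simp add: W1_def)
  have ZW1: "zeros E W1 = S1" using W0 by (simp add: W1_def)
  have Xd: "X d \<noteq> Zer" using nXY inE by (auto simp: zeros_def)
  have "d \<notin> S1" using nA dist cd(2) by (auto simp: S1_def)
  hence "d \<notin> zeros E W1" using ZW1 by simp
  hence W1d: "W1 d \<noteq> Zer" using inE by (simp add: zeros_def)
  have W1dX: "W1 d \<noteq> X d"
    using Xd by (cases "X d"; cases "W0 d") (auto simp: W1_def negsv_def)
  have dsep: "d \<in> sep X W1" using Xd W1d W1dX
    by (cases "X d"; cases "W1 d") (auto simp: sep_iff)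
  have "X \<noteq> negsv W1"
  proof
    assume "X = negsv W1"
    hence "?ZX = S1" using ZW1 by simp
    thus False using inXY nA dist ab by (auto simp: S1_def)
  qed
  then obtain Z where Z: "Z \<in> C" "\<forall>f. Z f = Pos \<longrightarrow> (X f = Pos \<or> W1 f = Pos) \<and> f \<noteq> d"
        "\<forall>f. Z f = Neg \<longrightarrow> (X f = Neg \<or> W1 f = Neg) \<and> f \<noteq> d"
    using elim[OF XC W1C _ dsep] by blast
  have pw: "Z x = Pos \<longrightarrow> (X x = Pos \<or> W1 x = Pos) \<and> x \<noteq> d"
        "Z x = Neg \<longrightarrow> (X x = Neg \<or> W1 x = Neg) \<and> x \<noteq> d" for x
    using Z by blast+
  define S2 where "S2 = insert a (insert d A)"
  have subZ: "S2 \<subseteq> zeros E Z"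
  proof
    fix f assume f: "f \<in> S2"
    have "Z f \<noteq> Pos \<and> Z f \<noteq> Neg"
    proof (cases "f = d")
      case True then show ?thesis using pw[of f] by auto
    next
      case False
      hence "f \<in> ?ZX" "f \<in> S1" using f inXY by (auto simp: S2_def S1_def A_def)
      hence "X f = Zer" "W1 f = Zer" using ZW1 by (auto simp: zeros_def)
      then show ?thesis using pw[of f] by auto
    qed
    moreover have "f \<in> E" using f AE inE by (auto simp: S2_def)
    ultimately show "f \<in> zeros E Z" by (cases "Z f") (auto simp: zeros_def)
  qed
  have "card S2 = r - 1" using cardA finA nA dist r3 by (simp add: S2_def)
  hence ZZ: "zeros E Z = S2" using subZ cardZ[OF Z(1)] finZ by (metis card_subset_eq)
  have Zb: "Z b = W1 b"
  proof -
    have "Z b \<noteq> Zer" using ZZ inE nA dist ab by (auto simp: zeros_def S2_def)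
    moreover have "X b = Zer" using inXY by (auto simp: zeros_def)
    ultimately show ?thesis using pw[of b] by (cases "Z b"; cases "W1 b") auto
  qed
  have Zc: "Z c = X c"
  proof -
    have "Z c \<noteq> Zer" using ZZ inE nA dist cd by (auto simp: zeros_def S2_def)
    moreover have "W1 c = Zer" using ZW1 inE by (auto simp: zeros_def S1_def)
    ultimately show ?thesis using pw[of c] by (cases "Z c"; cases "X c") auto
  qed
  have dXW1: "card (?ZX - zeros E W1) = 1" "card (zeros E W1 - ?ZY) = 1" "card (?ZY - zeros E W1) = 1"
  proof -
    have "?ZX - zeros E W1 = {b}" using ZW1 ZX nA dist ab by (auto simp: S1_def)
    moreover have "zeros E W1 - ?ZY = {a}" using ZW1 ZY nA dist by (auto simp: S1_def)
    moreover have "?ZY - zeros E W1 = {d}" using ZW1 ZY nA dist cd by (auto simp: S1_def)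
    ultimately show "card (?ZX - zeros E W1) = 1" "card (zeros E W1 - ?ZY) = 1" "card (?ZY - zeros E W1) = 1" by simp_all
  qed
  have dXZ: "card (?ZX - zeros E Z) = 1" "card (zeros E Z - ?ZY) = 1" "card (?ZY - zeros E Z) = 1"
  proof -
    have "?ZX - zeros E Z = {b}" using ZZ ZX nA dist ab by (auto simp: S2_def)
    moreover have "zeros E Z - ?ZY = {a}" using ZZ ZY nA dist by (auto simp: S2_def)
    moreover have "?ZY - zeros E Z = {c}" using ZZ ZY nA dist cd by (auto simp: S2_def)
    ultimately show "card (?ZX - zeros E Z) = 1" "card (zeros E Z - ?ZY) = 1" "card (?ZY - zeros E Z) = 1" by simp_all
  qed
  define cost where "cost W = card (sep X W) + card (sep W Y)" for W
  have reachW: "reach E C (cost W + 2) X Y"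
    if "W \<in> C" "card (?ZX - zeros E W) = 1" "card (zeros E W - ?ZY) = 1" for W
  proof -
    have "reach E C (card (sep X W) + 1 + (card (sep W Y) + 1)) X Y"
      using reach_trans[OF line[OF XC that(1,2)] line[OF that(1) YC that(3)]] .
    then show ?thesis by (simp add: cost_def)
  qed
  have sumW: "cost W + cost (negsv W) = 2 * (card E - r)"
    if "W \<in> C" "card (?ZX - zeros E W) = 1" "card (?ZY - zeros E W) = 1" for W
  proof -
    have "card (sep X W) + card (sep X (negsv W)) = card E - r" using pair_sum XC that by blast
    moreover have "card (sep Y W) + card (sep Y (negsv W)) = card E - r" using pair_sum YC that by blast
    ultimately show ?thesis by (simp add: cost_def sep_sym[of W Y] sep_sym[of "negsv W" Y])
  qed
  have s1: "cost W1 + cost (negsv W1) = 2 * (card E - r)" using sumW W1C dXW1 by blast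
  have s2: "cost Z + cost (negsv Z) = 2 * (card E - r)" using sumW Z(1) dXZ by blast
  have odd: "odd (cost W1 + cost Z)"
  proof -
    define g where "g e = ind (sep X W1) e + ind (sep W1 Y) e + ind (sep X Z) e + ind (sep Z Y) e" for e
    have "cost W1 + cost Z = (\<Sum>e\<in>E. g e)"
      unfolding cost_def g_def
      using card_ind[OF finE sepE[OF XC]] card_ind[OF finE sepE[OF W1C]]
        card_ind[OF finE sepE[OF Z(1)]]
      by (simp add: sum.distrib)
    also have "\<dots> = g d + (\<Sum>e\<in>E - {d}. g e)" by (rule sum.remove[OF finE inE(4)])
    finally have eq: "cost W1 + cost Z = g d + (\<Sum>e\<in>E - {d}. g e)" .
    have gd: "g d = 1"
    proof -
      have "Y d = Zer" "Z d = Zer" using inXY ZZ inE by (auto simp: zeros_def S2_def)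
      then show ?thesis using dsep by (auto simp: g_def ind_def sep_iff)
    qed
    have "even (\<Sum>e\<in>E - {d}. g e)"
    proof (rule dvd_sum)
      fix e assume e: "e \<in> E - {d}"
      show "even (g e)" unfolding g_def
      proof (rule even_g)
        show "(X e = Zer \<and> Z e = W1 e) \<or> (W1 e = Zer \<and> Y e = Zer \<and> Z e = X e) \<or>
              (X e \<noteq> Zer \<and> Y e \<noteq> Zer \<and> W1 e \<noteq> Zer \<and> Z e \<noteq> Zer)"
        proof (cases "e \<in> ?ZX \<union> ?ZY")
          case True
          then consider "e \<in> A" | "e = a" | "e = b" | "e = c" using ZX ZY e by auto
          then show ?thesis
          proof cases
            case 1
            then have "X e = Zer" "Z e = Zer" "W1 e = Zer" using ZX ZZ ZW1
              by (auto simp: zeros_def S1_def S2_def)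
            then show ?thesis by simp
          next
            case 2
            then have "X e = Zer" "Z e = Zer" "W1 e = Zer" using ZX ZZ ZW1
              by (auto simp: zeros_def S1_def S2_def)
            then show ?thesis by simp
          next
            case 3
            then have "X e = Zer" using ZX by (auto simp: zeros_def)
            then show ?thesis using Zb 3 by simp
          next
            case 4
            then have "W1 e = Zer" "Y e = Zer" using ZY ZW1
              by (auto simp: zeros_def S1_def)
            then show ?thesis using Zc 4 by simp
          qed
        next
          case False
          then have "e \<notin> S1" "e \<notin> S2" using ZX ZY by (auto simp: S1_def S2_def)
          then show ?thesis using False e ZW1 ZZ by (auto simp: zeros_def)
        qed
      qed
    qed
    then show ?thesis using eq gd by simp
  qed
  have "\<exists>W\<in>{W1, negsv W1, Z, negsv Z}. cost W < card E - r"
  proof (rule ccontr)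
    assume "\<not> ?thesis"
    hence "cost W1 \<ge> card E - r" "cost (negsv W1) \<ge> card E - r"
          "cost Z \<ge> card E - r" "cost (negsv Z) \<ge> card E - r" by auto
    hence "cost W1 = card E - r" "cost Z = card E - r" using s1 s2 by linarith+
    thus False using odd by simp
  qed
  then obtain W where W: "W \<in> {W1, negsv W1, Z, negsv Z}" "cost W < card E - r" by blast
  have "W \<in> C \<and> card (?ZX - zeros E W) = 1 \<and> card (zeros E W - ?ZY) = 1"
    using W(1) W1C Z(1) negC dXW1 dXZ by auto
  hence "reach E C (cost W + 2) X Y" using reachW by blast
  then show ?thesis by (rule reach_mono) (use W(2) in simp)
qed

end

theorem corollary4p3:
  fixes E :: "'a set" and C :: "'a signvec set" and r n :: nat and X Y :: "'a signvec"
  assumes "oriented_matroid E C"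
    and "card E = n"
    and "om_rank C = r"
    and "r \<ge> 3"
    and "uniform_om E C"
    and "X \<in> C" and "Y \<in> C"
    and "card (zeros E X - zeros E Y) = 2"
  shows "cg_dist E C X Y \<le> enat (n - r + 1)"
proof -
  interpret unif E C r using assms by (unfold_locales) auto
  show ?thesis using main[OF assms(6,7,8)] reach_dist assms(2) by blast
qed


end
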